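(* Let $A$ be a symmetric general metric space and let $\bar A$ be its Cauchy completion: the general metric space whose points are the closed (equivalently, minimal) Cauchy filters on $A$, with $\bar A(\varphi,\psi)=\lim^-_{y\in\psi}\lim^+_{x\in\varphi}A(x,y)$. Then the $\mathcal P_1$-completion of $A$, i.e. the general metric space whose points are the closed weakly flat filters on $A$ with distance $d(\mathcal F_1,\mathcal F_2)=\lim^+_{x\in\mathcal F_1}\lim^-_{y\in\mathcal F_2}A(x,y)$, is isomorphic to the general metric space whose points are the nonempty closed subsets of $\bar A$ (for the topology of the symmetric pseudometric $\bar A$) with distance $d(X,Y)=\sup_{\varphi\in X}\inf_{\psi\in Y}\bar A(\varphi,\psi)$; the isomorphism sends a closed weakly flat filter $\mathcal F$ to the set of closed Cauchy filters containing $\mathcal F$.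
   Context: A general metric space $A$ is a set with $A(-,-):A\times A\to[0,\infty]$, $A(x,x)=0$, $A(x,z)\le A(x,y)+A(y,z)$; symmetric means $A(x,y)=A(y,x)$. A filter on $A$ is a nonempty set of nonempty subsets closed under finite intersections and supersets; $\lim^+_{\mathcal F}t=\inf_{f\in\mathcal F}\sup_{x\in f}t(x)$, $\lim^-_{\mathcal F}t=\sup_{f\in\mathcal F}\inf_{x\in f}t(x)$ ($\inf\emptyset=\infty$, $\sup\emptyset=0$); $M^-(\mathcal F)(x)=\lim^-_{y\in\mathcal F}A(x,y)$. Cauchy: $\inf_f\sup_{x,y\in f}A(x,y)=0$. Weakly flat: $\lim^+_{\mathcal F}M^-(\mathcal F)=0$. A weakly flat filter $\mathcal F$ is closed iff for every $f\in\mathcal F$ there is $\epsilon>0$ with $\{x:M^-(\mathcal F)(x)\le\epsilon\}\subseteq f$. Two general metric spaces are isomorphic if there is a bijection preserving distances. *)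

theory Defs
  imports "HOL-Library.Extended_Nonnegative_Real"
begin

text \<open>Distances take values in [0,\<infinity>], modelled by ennreal (inf of empty = top, sup of empty = 0).
  The underlying set of a general metric space is the whole type 'a.\<close>

definition gen_metric :: "('a \<Rightarrow> 'a \<Rightarrow> ennreal) \<Rightarrow> bool" where
  "gen_metric A \<longleftrightarrow> (\<forall>x. A x x = 0) \<and> (\<forall>x y z. A x z \<le> A x y + A y z)"

definition symmetric_gm :: "('a \<Rightarrow> 'a \<Rightarrow> ennreal) \<Rightarrow> bool" where
  "symmetric_gm A \<longleftrightarrow> (\<forall>x y. A x y = A y x)"

definition is_filt :: "'a set set \<Rightarrow> bool" where
  "is_filt F \<longleftrightarrow> F \<noteq> {} \<and> (\<forall>f\<in>F. f \<noteq> {})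
     \<and> (\<forall>f\<in>F. \<forall>g\<in>F. f \<inter> g \<in> F) \<and> (\<forall>f\<in>F. \<forall>g. f \<subseteq> g \<longrightarrow> g \<in> F)"

definition limsup_F :: "'a set set \<Rightarrow> ('a \<Rightarrow> ennreal) \<Rightarrow> ennreal" where
  "limsup_F F t = (INF f\<in>F. SUP x\<in>f. t x)"

definition liminf_F :: "'a set set \<Rightarrow> ('a \<Rightarrow> ennreal) \<Rightarrow> ennreal" where
  "liminf_F F t = (SUP f\<in>F. INF x\<in>f. t x)"

definition Mminus :: "('a \<Rightarrow> 'a \<Rightarrow> ennreal) \<Rightarrow> 'a set set \<Rightarrow> 'a \<Rightarrow> ennreal" where
  "Mminus A F x = liminf_F F (\<lambda>y. A x y)"

definition cauchy_filt :: "('a \<Rightarrow> 'a \<Rightarrow> ennreal) \<Rightarrow> 'a set set \<Rightarrow> bool" where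
  "cauchy_filt A F \<longleftrightarrow> (INF f\<in>F. SUP x\<in>f. SUP y\<in>f. A x y) = 0"

definition weakly_flat :: "('a \<Rightarrow> 'a \<Rightarrow> ennreal) \<Rightarrow> 'a set set \<Rightarrow> bool" where
  "weakly_flat A F \<longleftrightarrow> limsup_F F (Mminus A F) = 0"

definition closed_filt :: "('a \<Rightarrow> 'a \<Rightarrow> ennreal) \<Rightarrow> 'a set set \<Rightarrow> bool" where
  "closed_filt A F \<longleftrightarrow> weakly_flat A F \<and>
     (\<forall>f\<in>F. \<exists>\<epsilon>::real. \<epsilon> > 0 \<and> {x. Mminus A F x \<le> ennreal \<epsilon>} \<subseteq> f)"

definition cauchy_pts :: "('a \<Rightarrow> 'a \<Rightarrow> ennreal) \<Rightarrow> 'a set set set" where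
  "cauchy_pts A = {\<phi>. is_filt \<phi> \<and> cauchy_filt A \<phi> \<and> closed_filt A \<phi>}"

definition Abar :: "('a \<Rightarrow> 'a \<Rightarrow> ennreal) \<Rightarrow> 'a set set \<Rightarrow> 'a set set \<Rightarrow> ennreal" where
  "Abar A \<phi> \<psi> = liminf_F \<psi> (\<lambda>y. limsup_F \<phi> (\<lambda>x. A x y))"

definition P1_pts :: "('a \<Rightarrow> 'a \<Rightarrow> ennreal) \<Rightarrow> 'a set set set" where
  "P1_pts A = {F. is_filt F \<and> weakly_flat A F \<and> closed_filt A F}"

definition P1_dist :: "('a \<Rightarrow> 'a \<Rightarrow> ennreal) \<Rightarrow> 'a set set \<Rightarrow> 'a set set \<Rightarrow> ennreal" where
  "P1_dist A F1 F2 = limsup_F F1 (\<lambda>x. liminf_F F2 (\<lambda>y. A x y))"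

text \<open>Closed subsets of the completion w.r.t. the topology of the (symmetric) pseudometric Abar:
  X contains every point at distance 0 from X (open balls {\<psi>. Abar \<phi> \<psi> < r}).\<close>
definition closed_in_bar :: "('a \<Rightarrow> 'a \<Rightarrow> ennreal) \<Rightarrow> 'a set set set \<Rightarrow> bool" where
  "closed_in_bar A X \<longleftrightarrow> X \<subseteq> cauchy_pts A \<and>
     (\<forall>\<phi>\<in>cauchy_pts A. (\<forall>r>0. \<exists>\<psi>\<in>X. Abar A \<phi> \<psi> < r) \<longrightarrow> \<phi> \<in> X)"

definition closed_subsets_bar :: "('a \<Rightarrow> 'a \<Rightarrow> ennreal) \<Rightarrow> 'a set set set set" where
  "closed_subsets_bar A = {X. X \<noteq> {} \<and> closed_in_bar A X}"

definition haus_dist :: "('a \<Rightarrow> 'a \<Rightarrow> ennreal) \<Rightarrow> 'a set set set \<Rightarrow> 'a set set set \<Rightarrow> ennreal" where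
  "haus_dist A X Y = (SUP \<phi>\<in>X. INF \<psi>\<in>Y. Abar A \<phi> \<psi>)"

definition iso_map :: "('a \<Rightarrow> 'a \<Rightarrow> ennreal) \<Rightarrow> 'a set set \<Rightarrow> 'a set set set" where
  "iso_map A F = {\<phi>\<in>cauchy_pts A. F \<subseteq> \<phi>}"

end

theory Submission
  imports Defs
begin

definition Kset :: "('a \<Rightarrow> 'a \<Rightarrow> ennreal) \<Rightarrow> ennreal \<Rightarrow> 'a set set \<Rightarrow> 'a set" where
  "Kset A c F = {x. \<forall>g\<in>F. \<exists>y\<in>g. A x y < c}"

lemma ennreal_less_add_le: "(a::ennreal) < c \<Longrightarrow> b \<le> ennreal d \<Longrightarrow> a + b < c + ennreal d"
proof -
  assume 1: "a < c" and 2: "b \<le> ennreal d"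
  have "a + b \<le> a + ennreal d" using 2 by (rule add_left_mono)
  also have "\<dots> < c + ennreal d"
    using 1 ennreal_add_left_cancel_less[of "ennreal d" a c] by (simp add: add.commute)
  finally show ?thesis .
qed

lemma Kset_mono: assumes "c \<le> c'" "F' \<subseteq> F" shows "Kset A c F \<subseteq> Kset A c' F'"
proof
  fix x assume x: "x \<in> Kset A c F"
  show "x \<in> Kset A c' F'" unfolding Kset_def
  proof (intro CollectI ballI)
    fix g assume "g \<in> F'"
    then have "g \<in> F" using assms by blast
    then obtain y where "y \<in> g" "A x y < c" using x by (auto simp: Kset_def)
    then show "\<exists>y\<in>g. A x y < c'" using assms(1) by (meson less_le_trans)
  qed
qed

lemma M_less: assumes "Mminus A F x < c" shows "x \<in> Kset A c F"
  unfolding Kset_def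
proof (intro CollectI ballI)
  fix g assume g: "g \<in> F"
  have "(INF y\<in>g. A x y) \<le> Mminus A F x" unfolding Mminus_def liminf_F_def using g by (rule SUP_upper)
  then have "(INF y\<in>g. A x y) < c" using assms by (rule le_less_trans)
  then show "\<exists>y\<in>g. A x y < c" by (simp add: INF_less_iff)
qed

lemma M_le: assumes "x \<in> Kset A c F" shows "Mminus A F x \<le> c"
  unfolding Mminus_def liminf_F_def
proof (rule SUP_least)
  fix g assume g: "g \<in> F"
  then obtain y where y: "y \<in> g" "A x y < c" using assms by (auto simp: Kset_def)
  have "(INF y\<in>g. A x y) \<le> A x y" using y(1) by (rule INF_lower)
  then show "(INF y\<in>g. A x y) \<le> c" using y(2) by simp
qed

lemma zero_eps: assumes "\<And>e::real. e > 0 \<Longrightarrow> (x::ennreal) \<le> ennreal e" shows "x = 0"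
proof -
  have "x \<le> 0" by (rule ennreal_le_epsilon) (simp add: assms)
  then show ?thesis by simp
qed

lemma filt_up: "is_filt F \<Longrightarrow> f \<in> F \<Longrightarrow> f \<subseteq> g \<Longrightarrow> g \<in> F"
  unfolding is_filt_def by blast

lemma filt_int: "is_filt F \<Longrightarrow> f \<in> F \<Longrightarrow> g \<in> F \<Longrightarrow> f \<inter> g \<in> F"
  unfolding is_filt_def by blast

lemma filt_ne: "is_filt F \<Longrightarrow> f \<in> F \<Longrightarrow> \<exists>x. x \<in> f"
  unfolding is_filt_def by blast

lemma wf_K: assumes "is_filt F"
  shows "weakly_flat A F \<longleftrightarrow> (\<forall>e>0. Kset A (ennreal e) F \<in> F)"
proof
  assume w: "weakly_flat A F"
  show "\<forall>e>0. Kset A (ennreal e) F \<in> F"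
  proof (intro allI impI)
    fix e :: real assume "e > 0"
    then have "limsup_F F (Mminus A F) < ennreal e" using w by (simp add: weakly_flat_def)
    then obtain f where f: "f \<in> F" "(SUP x\<in>f. Mminus A F x) < ennreal e"
      unfolding limsup_F_def by (auto simp: INF_less_iff)
    then have "f \<subseteq> Kset A (ennreal e) F"
      by (auto intro!: M_less dest: le_less_trans[OF SUP_upper])
    then show "Kset A (ennreal e) F \<in> F" using f assms filt_up by blast
  qed
next
  assume k: "\<forall>e>0. Kset A (ennreal e) F \<in> F"
  show "weakly_flat A F" unfolding weakly_flat_def
  proof (rule zero_eps)
    fix e :: real assume "e > 0"
    then have "Kset A (ennreal e) F \<in> F" using k by blast
    then show "limsup_F F (Mminus A F) \<le> ennreal e"
      unfolding limsup_F_def by (rule INF_lower2) (auto intro!: SUP_least M_le)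
  qed
qed

lemma cl_K: "closed_filt A F \<longleftrightarrow> weakly_flat A F \<and> (\<forall>f\<in>F. \<exists>e>0. Kset A (ennreal e) F \<subseteq> f)"
proof -
  have a: "Kset A (ennreal e) F \<subseteq> {x. Mminus A F x \<le> ennreal e}" for e
    by (auto intro: M_le)
  have b: "{x. Mminus A F x \<le> ennreal (e/2)} \<subseteq> Kset A (ennreal e) F" if "e > 0" for e
  proof
    fix x assume "x \<in> {x. Mminus A F x \<le> ennreal (e/2)}"
    moreover have "ennreal (e/2) < ennreal e" using that by (simp add: ennreal_lessI)
    ultimately show "x \<in> Kset A (ennreal e) F" by (auto intro: M_less le_less_trans)
  qed
  show ?thesis unfolding closed_filt_def
  proof (intro iffI conjI ballI)
    fix f assume "weakly_flat A F \<and> (\<forall>f\<in>F. \<exists>\<epsilon>>0. {x. Mminus A F x \<le> ennreal \<epsilon>} \<subseteq> f)" "f \<in> F"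
    then show "\<exists>e>0. Kset A (ennreal e) F \<subseteq> f" using a by blast
  next
    fix f assume "weakly_flat A F \<and> (\<forall>f\<in>F. \<exists>e>0. Kset A (ennreal e) F \<subseteq> f)" "f \<in> F"
    then obtain e where "e > 0" "Kset A (ennreal e) F \<subseteq> f" by blast
    then show "\<exists>\<epsilon>>0. {x. Mminus A F x \<le> ennreal \<epsilon>} \<subseteq> f"
      using b[of e] by (intro exI[of _ "e/2"]) auto
  qed auto
qed

lemma cauchy_K: "cauchy_filt A F \<longleftrightarrow> (\<forall>e>0. \<exists>h\<in>F. \<forall>x\<in>h. \<forall>y\<in>h. A x y < ennreal e)"
proof
  assume c: "cauchy_filt A F"
  show "\<forall>e>0. \<exists>h\<in>F. \<forall>x\<in>h. \<forall>y\<in>h. A x y < ennreal e"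
  proof (intro allI impI)
    fix e :: real assume "e > 0"
    then have "(INF f\<in>F. SUP x\<in>f. SUP y\<in>f. A x y) < ennreal e" using c by (simp add: cauchy_filt_def)
    then obtain h where "h \<in> F" "(SUP x\<in>h. SUP y\<in>h. A x y) < ennreal e" by (auto simp: INF_less_iff)
    then show "\<exists>h\<in>F. \<forall>x\<in>h. \<forall>y\<in>h. A x y < ennreal e"
      by (intro bexI[of _ h]) (auto, meson SUP_upper le_less_trans)
  qed
next
  assume k: "\<forall>e>0. \<exists>h\<in>F. \<forall>x\<in>h. \<forall>y\<in>h. A x y < ennreal e"
  show "cauchy_filt A F" unfolding cauchy_filt_def
  proof (rule zero_eps)
    fix e :: real assume "e > 0"
    then obtain h where "h \<in> F" "\<forall>x\<in>h. \<forall>y\<in>h. A x y < ennreal e" using k by blast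
    then show "(INF f\<in>F. SUP x\<in>f. SUP y\<in>f. A x y) \<le> ennreal e"
      by (intro INF_lower2[of h] SUP_least) (auto intro: less_imp_le)
  qed
qed

lemma cauchy_Kin: assumes "is_filt F" "\<forall>e>0. \<exists>h\<in>F. \<forall>x\<in>h. \<forall>y\<in>h. A x y < ennreal e" "e > 0"
  shows "Kset A (ennreal e) F \<in> F"
proof -
  obtain h where h: "h \<in> F" "\<forall>x\<in>h. \<forall>y\<in>h. A x y < ennreal e" using assms by blast
  have "h \<subseteq> Kset A (ennreal e) F"
  proof
    fix x assume x: "x \<in> h"
    show "x \<in> Kset A (ennreal e) F" unfolding Kset_def
    proof (intro CollectI ballI)
      fix g assume "g \<in> F"
      then obtain y where "y \<in> g \<inter> h" using filt_int filt_ne assms(1) h(1) by blast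
      then show "\<exists>y\<in>g. A x y < ennreal e" using h x by blast
    qed
  qed
  then show ?thesis using filt_up assms(1) h(1) by blast
qed

lemma AbarD: assumes "Abar A \<phi> \<psi> < c" "h \<in> \<psi>" shows "\<exists>w\<in>h. \<exists>k\<in>\<phi>. \<forall>u\<in>k. A u w < c"
proof -
  have "(INF w\<in>h. limsup_F \<phi> (\<lambda>x. A x w)) < c"
    using assms unfolding Abar_def liminf_F_def by (meson SUP_upper le_less_trans)
  then obtain w where w: "w \<in> h" "limsup_F \<phi> (\<lambda>x. A x w) < c" by (auto simp: INF_less_iff)
  then obtain k where k: "k \<in> \<phi>" "(SUP u\<in>k. A u w) < c" unfolding limsup_F_def by (auto simp: INF_less_iff)
  then have "\<forall>u\<in>k. A u w < c" by (meson SUP_upper le_less_trans)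
  then show ?thesis using w k by blast
qed

lemma AbarI: assumes "\<And>h. h \<in> \<psi> \<Longrightarrow> \<exists>w\<in>h. \<exists>k\<in>\<phi>. \<forall>u\<in>k. A u w \<le> c" shows "Abar A \<phi> \<psi> \<le> c"
  unfolding Abar_def liminf_F_def limsup_F_def
proof (rule SUP_least)
  fix h assume "h \<in> \<psi>"
  then obtain w k where wk: "w \<in> h" "k \<in> \<phi>" "\<forall>u\<in>k. A u w \<le> c" using assms by blast
  have "(SUP u\<in>k. A u w) \<le> c" by (rule SUP_least) (simp add: wk(3))
  then have "(INF k\<in>\<phi>. SUP u\<in>k. A u w) \<le> c" using wk(2) by (rule INF_lower2[rotated])
  then show "(INF w\<in>h. INF k\<in>\<phi>. SUP u\<in>k. A u w) \<le> c" using wk(1) by (rule INF_lower2[rotated])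
qed


locale gm =
  fixes A :: "'a \<Rightarrow> 'a \<Rightarrow> ennreal"
  assumes refl0: "A x x = 0" and tri: "A x z \<le> A x y + A y z" and symm: "A x y = A y x"
begin

lemma tri_le: "A x y \<le> ennreal p \<Longrightarrow> A y z \<le> ennreal q \<Longrightarrow> 0 \<le> p \<Longrightarrow> 0 \<le> q \<Longrightarrow> A x z \<le> ennreal (p+q)"
proof -
  assume a: "A x y \<le> ennreal p" "A y z \<le> ennreal q" "0 \<le> p" "0 \<le> q"
  have "A x z \<le> A x y + A y z" by (rule tri)
  also have "\<dots> \<le> ennreal p + ennreal q" using a by (intro add_mono)
  finally show ?thesis using a by simp
qed

lemma tri_less: "A x y < c \<Longrightarrow> A y z \<le> ennreal d \<Longrightarrow> A x z < c + ennreal d"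
  using tri[of x z y] ennreal_less_add_le[of "A x y" c "A y z" d] by (meson le_less_trans)

lemma tri_leless: "A x y \<le> ennreal p \<Longrightarrow> A y z < ennreal q \<Longrightarrow> 0 \<le> p \<Longrightarrow> 0 \<le> q \<Longrightarrow> A x z < ennreal (p+q)"
proof -
  assume a: "A x y \<le> ennreal p" "A y z < ennreal q" "0 \<le> p" "0 \<le> q"
  have "A x z \<le> A y z + A x y" using tri[of x z y] by (simp add: add.commute)
  also have "\<dots> < ennreal q + ennreal p" using a by (intro ennreal_less_add_le)
  finally show ?thesis using a by (simp add: add.commute)
qed

lemma tri_lless: "A x y < ennreal p \<Longrightarrow> A y z < ennreal q \<Longrightarrow> 0 \<le> p \<Longrightarrow> 0 \<le> q \<Longrightarrow> A x z < ennreal (p+q)"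
  using tri_leless[of x y p z q] by (auto intro: less_imp_le)

lemma CON:
  assumes F: "is_filt F" and wf: "\<forall>e>0. Kset A (ennreal e) F \<in> F"
    and cl: "\<forall>g\<in>F. \<exists>e>0. Kset A (ennreal e) F \<subseteq> g"
    and x: "x \<in> Kset A c F" and d: "d > 0"
  shows "\<exists>\<phi>. \<phi> \<in> cauchy_pts A \<and> F \<subseteq> \<phi> \<and> x \<in> Kset A (c + ennreal d) \<phi>"
proof -
  define e where "e n = d / 2 / 2^n" for n :: nat
  have epos: "e n > 0" for n using d by (simp add: e_def)
  have eSuc: "e (Suc n) = e n / 2" for n by (simp add: e_def)
  have emono: "e m \<le> e n" if "n \<le> m" for n m
  proof -
    have "(2::real)^n \<le> 2^m" using that by (rule power_increasing) simp
    then show ?thesis unfolding e_def using d by (intro divide_left_mono) auto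
  qed
  have esmall: "\<exists>n. e n < t" if "t > 0" for t
  proof -
    have "t/(d/2) > 0" using that d by simp
    then obtain n where n: "(1/2::real)^n < t / (d/2)" using real_arch_pow_inv[of "t/(d/2)" "1/2"] by auto
    have "e n = (d/2) * (1/2)^n" by (simp add: e_def power_one_over)
    also have "\<dots> < (d/2) * (t / (d/2))" using n d by (intro mult_strict_left_mono) auto
    also have "\<dots> = t" using d by simp
    finally show ?thesis by blast
  qed
  have "Kset A (ennreal (e 0)) F \<in> F" using wf epos by blast
  then obtain x1 where x1: "x1 \<in> Kset A (ennreal (e 0)) F" "A x x1 < c" using x unfolding Kset_def by blast
  define nx where "nx n y = (SOME z. z \<in> Kset A (ennreal (e (Suc n))) F \<and> A y z < ennreal (e n))" for n y
  have nx: "nx n y \<in> Kset A (ennreal (e (Suc n))) F \<and> A y (nx n y) < ennreal (e n)"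
    if y: "y \<in> Kset A (ennreal (e n)) F" for n y
  proof -
    have "Kset A (ennreal (e (Suc n))) F \<in> F" using wf epos by blast
    moreover have "\<forall>g\<in>F. \<exists>z\<in>g. A y z < ennreal (e n)" using y by (simp add: Kset_def)
    ultimately have "\<exists>z. z \<in> Kset A (ennreal (e (Suc n))) F \<and> A y z < ennreal (e n)" by blast
    then show ?thesis unfolding nx_def by (rule someI_ex)
  qed
  define s where "s = rec_nat x1 nx"
  have s0: "s 0 = x1" and sS: "s (Suc n) = nx n (s n)" for n by (simp_all add: s_def)
  have sK: "s n \<in> Kset A (ennreal (e n)) F" for n
    by (induction n) (use x1 nx in \<open>auto simp: s0 sS\<close>)
  have step: "A (s n) (s (Suc n)) < ennreal (e n)" for n using nx[OF sK[of n]] sS by simp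
  have dist: "A (s n) (s (n+j)) \<le> ennreal (2 * e n - 2 * e (n+j))" for n j
  proof (induction j)
    case 0 then show ?case by (simp add: refl0)
  next
    case (Suc j)
    have "A (s n) (s (n + Suc j)) \<le> ennreal ((2 * e n - 2 * e (n+j)) + e (n+j))"
      using tri_le[OF Suc.IH less_imp_le[OF step[of "n+j"]]] emono[of n "n+j"] epos[of "n+j"] by simp
    also have "(2 * e n - 2 * e (n+j)) + e (n+j) = 2 * e n - 2 * e (n + Suc j)" using eSuc[of "n+j"] by simp
    finally show ?case .
  qed
  have dist2: "A (s n) (s m) \<le> ennreal (2 * e n)" if nm: "n \<le> m" for n m
  proof -
    obtain j where m: "m = n + j" using le_Suc_ex[OF nm] by blast
    have "A (s n) (s m) \<le> ennreal (2 * e n - 2 * e m)" using dist m by simp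
    also have "\<dots> \<le> ennreal (2 * e n)" using epos[of m] by (intro ennreal_leI) simp
    finally show ?thesis .
  qed
  define B where "B n = {y. A (s n) y \<le> ennreal (4 * e n)}" for n
  have sB: "s n \<in> B n" for n by (simp add: B_def refl0)
  have Bmono: "B m \<subseteq> B n" if nm: "n \<le> m" for n m
  proof (cases "n = m")
    case True then show ?thesis by simp
  next
    case False
    then have "Suc n \<le> m" using nm by simp
    then have em: "e m \<le> e n / 2" using emono[of "Suc n" m] eSuc[of n] by simp
    show ?thesis
    proof
      fix y assume "y \<in> B m"
      then have "A (s m) y \<le> ennreal (4 * e m)" by (simp add: B_def)
      then have "A (s n) y \<le> ennreal (2 * e n + 4 * e m)"
        by (rule tri_le[OF dist2[OF nm]]) (use epos[of n] epos[of m] in auto)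
      also have "\<dots> \<le> ennreal (4 * e n)" using em by (intro ennreal_leI) simp
      finally show "y \<in> B n" by (simp add: B_def)
    qed
  qed
  define \<phi> where "\<phi> = {h. \<exists>n. B n \<subseteq> h}"
  have B\<phi>: "B n \<in> \<phi>" for n by (auto simp: \<phi>_def)
  have \<phi>filt: "is_filt \<phi>" unfolding is_filt_def
  proof (intro conjI ballI allI impI)
    show "\<phi> \<noteq> {}" using B\<phi> by blast
  next
    fix f assume "f \<in> \<phi>" then show "f \<noteq> {}" using sB by (auto simp: \<phi>_def)
  next
    fix f g assume "f \<in> \<phi>" "g \<in> \<phi>"
    then obtain n m where "B n \<subseteq> f" "B m \<subseteq> g" by (auto simp: \<phi>_def)
    then have "B (max n m) \<subseteq> f \<inter> g" using Bmono[of n "max n m"] Bmono[of m "max n m"] by auto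
    then show "f \<inter> g \<in> \<phi>" by (auto simp: \<phi>_def)
  next
    fix f g assume "f \<in> \<phi>" "f \<subseteq> g" then show "g \<in> \<phi>" by (auto simp: \<phi>_def)
  qed
  have \<phi>cauchy: "\<forall>\<epsilon>>0. \<exists>h\<in>\<phi>. \<forall>u\<in>h. \<forall>v\<in>h. A u v < ennreal \<epsilon>"
  proof (intro allI impI)
    fix \<epsilon> :: real assume "\<epsilon> > 0"
    then obtain n where n: "e n < \<epsilon> / 8" using esmall by (meson divide_pos_pos zero_less_numeral)
    have "\<forall>u\<in>B n. \<forall>v\<in>B n. A u v < ennreal \<epsilon>"
    proof (intro ballI)
      fix u v assume "u \<in> B n" "v \<in> B n"
      then have "A u (s n) \<le> ennreal (4 * e n)" "A (s n) v \<le> ennreal (4 * e n)" by (simp_all add: B_def symm)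
      then have "A u v \<le> ennreal (4 * e n + 4 * e n)" using epos[of n] tri_le[of u "s n" "4 * e n" v "4 * e n"] by auto
      also have "\<dots> < ennreal \<epsilon>" using n \<open>\<epsilon> > 0\<close> by (intro ennreal_lessI) auto
      finally show "A u v < ennreal \<epsilon>" .
    qed
    then show "\<exists>h\<in>\<phi>. \<forall>u\<in>h. \<forall>v\<in>h. A u v < ennreal \<epsilon>" using B\<phi> by blast
  qed
  have \<phi>K: "\<forall>\<epsilon>>0. Kset A (ennreal \<epsilon>) \<phi> \<in> \<phi>" using cauchy_Kin[OF \<phi>filt \<phi>cauchy] by blast
  have \<phi>cl: "\<forall>h\<in>\<phi>. \<exists>\<epsilon>>0. Kset A (ennreal \<epsilon>) \<phi> \<subseteq> h"
  proof
    fix h assume "h \<in> \<phi>"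
    then obtain n where n: "B n \<subseteq> h" by (auto simp: \<phi>_def)
    have "Kset A (ennreal (e n)) \<phi> \<subseteq> B n"
    proof
      fix y assume "y \<in> Kset A (ennreal (e n)) \<phi>"
      then obtain z where z: "z \<in> B (Suc n)" "A y z < ennreal (e n)" using B\<phi>[of "Suc n"] by (auto simp: Kset_def)
      have "A (s (Suc n)) z \<le> ennreal (4 * e (Suc n))" using z by (simp add: B_def)
      moreover have "A z y \<le> ennreal (e n)" using z by (simp add: symm less_imp_le)
      ultimately have "A (s (Suc n)) y \<le> ennreal (4 * e (Suc n) + e n)"
        using epos[of n] epos[of "Suc n"] tri_le[of "s (Suc n)" z "4 * e (Suc n)" y "e n"] by auto
      then have "A (s n) y \<le> ennreal (e n + (4 * e (Suc n) + e n))"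
        using epos[of n] epos[of "Suc n"] tri_le[of "s n" "s (Suc n)" "e n" y "4 * e (Suc n) + e n"]
          less_imp_le[OF step[of n]] by auto
      also have "e n + (4 * e (Suc n) + e n) = 4 * e n" using eSuc[of n] by simp
      finally show "y \<in> B n" by (simp add: B_def)
    qed
    then show "\<exists>\<epsilon>>0. Kset A (ennreal \<epsilon>) \<phi> \<subseteq> h" using n epos by blast
  qed
  have \<phi>pt: "\<phi> \<in> cauchy_pts A" unfolding cauchy_pts_def
    using \<phi>filt \<phi>cauchy \<phi>K \<phi>cl by (simp add: cauchy_K cl_K wf_K)
  have F\<phi>: "F \<subseteq> \<phi>"
  proof
    fix g assume "g \<in> F"
    then obtain \<epsilon> where eps: "\<epsilon> > 0" "Kset A (ennreal \<epsilon>) F \<subseteq> g" using cl by blast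
    then obtain n where n: "e n < \<epsilon> / 5" using esmall by (meson divide_pos_pos zero_less_numeral)
    have "B n \<subseteq> Kset A (ennreal \<epsilon>) F"
    proof
      fix y assume y: "y \<in> B n"
      show "y \<in> Kset A (ennreal \<epsilon>) F" unfolding Kset_def
      proof (intro CollectI ballI)
        fix g' assume "g' \<in> F"
        then obtain z where z: "z \<in> g'" "A (s n) z < ennreal (e n)" using sK[of n] by (auto simp: Kset_def)
        have "A y (s n) \<le> ennreal (4 * e n)" using y by (simp add: B_def symm)
        then have "A y z < ennreal (4 * e n + e n)" using z epos[of n] tri_leless[of y "s n" "4 * e n" z "e n"] by auto
        also have "\<dots> \<le> ennreal \<epsilon>" using n by (intro ennreal_leI) simp
        finally show "\<exists>z\<in>g'. A y z < ennreal \<epsilon>" using z by blast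
      qed
    qed
    then show "g \<in> \<phi>" using eps B\<phi>[of n] \<phi>filt filt_up by blast
  qed
  have x\<phi>: "x \<in> Kset A (c + ennreal d) \<phi>" unfolding Kset_def
  proof (intro CollectI ballI)
    fix h assume "h \<in> \<phi>"
    then obtain n where n: "B n \<subseteq> h" by (auto simp: \<phi>_def)
    have "A x (s n) < c + ennreal (2 * e 0)" using x1(2) dist2[of 0 n] s0 by (intro tri_less) auto
    also have "2 * e 0 = d" by (simp add: e_def)
    finally show "\<exists>y\<in>h. A x y < c + ennreal d" using n sB by blast
  qed
  show ?thesis using \<phi>pt F\<phi> x\<phi> by blast
qed

end


lemma ennreal_add_strict: "(a::ennreal) < p \<Longrightarrow> b < q \<Longrightarrow> a + b < p + q"
proof (cases q rule: ennreal_cases)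
  case (real r)
  assume "a < p" "b < q"
  then show ?thesis using real ennreal_less_add_le[of a p b r] by (simp add: less_imp_le)
next
  case top
  assume "a < p" "b < q"
  have "a < top" by (rule less_le_trans[OF \<open>a < p\<close> top_greatest])
  moreover have "b < top" by (rule less_le_trans[OF \<open>b < q\<close> top_greatest])
  ultimately
  have "a + b < top" by (simp add: ennreal_add_less_top)
  then show ?thesis using top by simp
qed

lemma small_pos: "0 < (r::ennreal) \<Longrightarrow> \<exists>e>0. ennreal e < r"
proof (cases r rule: ennreal_cases)
  case (real q)
  assume "0 < r"
  then have "q > 0" using real by simp
  then show ?thesis using real by (intro exI[of _ "q/2"]) (auto intro: ennreal_lessI)
next
  case top then show ?thesis by (intro exI[of _ 1]) auto
qed

lemma half_sum: "0 < e \<Longrightarrow> ennreal (e/2) + ennreal (e/2) = ennreal e"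
  using ennreal_plus[of "e/2" "e/2"] by simp

context gm
begin

lemma P1D: assumes "F \<in> P1_pts A"
  shows "is_filt F" "\<forall>e>0. Kset A (ennreal e) F \<in> F" "\<forall>g\<in>F. \<exists>e>0. Kset A (ennreal e) F \<subseteq> g"
proof -
  have f: "is_filt F" "weakly_flat A F" "closed_filt A F" using assms by (simp_all add: P1_pts_def)
  show "is_filt F" by (rule f(1))
  show "\<forall>e>0. Kset A (ennreal e) F \<in> F" using f(2) unfolding wf_K[OF f(1)] .
  show "\<forall>g\<in>F. \<exists>e>0. Kset A (ennreal e) F \<subseteq> g" using f(3) unfolding cl_K by (rule conjunct2)
qed

lemma CD: assumes "\<phi> \<in> cauchy_pts A"
  shows "is_filt \<phi>" "\<forall>e>0. Kset A (ennreal e) \<phi> \<in> \<phi>" "\<forall>g\<in>\<phi>. \<exists>e>0. Kset A (ennreal e) \<phi> \<subseteq> g"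
    "\<forall>e>0. \<exists>h\<in>\<phi>. \<forall>x\<in>h. \<forall>y\<in>h. A x y < ennreal e"
proof -
  have f: "is_filt \<phi>" "cauchy_filt A \<phi>" "closed_filt A \<phi>" using assms by (simp_all add: cauchy_pts_def)
  then have "weakly_flat A \<phi>" by (simp add: cl_K)
  then show "\<forall>e>0. Kset A (ennreal e) \<phi> \<in> \<phi>" unfolding wf_K[OF f(1)] .
  show "is_filt \<phi>" by (rule f(1))
  show "\<forall>g\<in>\<phi>. \<exists>e>0. Kset A (ennreal e) \<phi> \<subseteq> g" using f(3) unfolding cl_K by (rule conjunct2)
  show "\<forall>e>0. \<exists>h\<in>\<phi>. \<forall>x\<in>h. \<forall>y\<in>h. A x y < ennreal e" using f(2) unfolding cauchy_K .
qed

lemma CON': assumes "F \<in> P1_pts A" "x \<in> Kset A c F" "d > 0"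
  shows "\<exists>\<phi>\<in>iso_map A F. x \<in> Kset A (c + ennreal d) \<phi>"
  using CON[OF P1D[OF assms(1)] assms(2,3)] by (auto simp: iso_map_def)

lemma Kset_sub: "F \<subseteq> \<phi> \<Longrightarrow> Kset A c \<phi> \<subseteq> Kset A c F"
  by (rule Kset_mono) auto

lemma iso_ne: assumes "F \<in> P1_pts A" shows "iso_map A F \<noteq> {}"
proof -
  have "Kset A (ennreal 1) F \<in> F" using P1D(2)[OF assms] by (meson zero_less_one)
  then obtain x where "x \<in> Kset A (ennreal 1) F" using filt_ne P1D(1)[OF assms] by blast
  then show ?thesis using CON'[OF assms, of x "ennreal 1" 1] by auto
qed

lemma iso_closed: assumes F: "F \<in> P1_pts A" shows "closed_in_bar A (iso_map A F)"
  unfolding closed_in_bar_def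
proof (intro conjI ballI impI)
  show "iso_map A F \<subseteq> cauchy_pts A" by (auto simp: iso_map_def)
next
  fix \<phi> assume \<phi>: "\<phi> \<in> cauchy_pts A" and H: "\<forall>r>0. \<exists>\<psi>\<in>iso_map A F. Abar A \<phi> \<psi> < r"
  have "F \<subseteq> \<phi>"
  proof
    fix g assume "g \<in> F"
    then obtain \<epsilon> where eps: "\<epsilon> > 0" "Kset A (ennreal \<epsilon>) F \<subseteq> g" using P1D[OF F] by blast
    have "Kset A (ennreal (\<epsilon>/2)) \<phi> \<subseteq> Kset A (ennreal \<epsilon>) F"
    proof
      fix y assume y: "y \<in> Kset A (ennreal (\<epsilon>/2)) \<phi>"
      have "ennreal (\<epsilon>/2) > 0" using eps by simp
      then obtain \<psi> where \<psi>: "\<psi> \<in> iso_map A F" "Abar A \<phi> \<psi> < ennreal (\<epsilon>/2)" using H by blast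
      show "y \<in> Kset A (ennreal \<epsilon>) F" unfolding Kset_def
      proof (intro CollectI ballI)
        fix g' assume "g' \<in> F"
        then have "g' \<in> \<psi>" using \<psi> by (auto simp: iso_map_def)
        then obtain w k where wk: "w \<in> g'" "k \<in> \<phi>" "\<forall>u\<in>k. A u w < ennreal (\<epsilon>/2)" using AbarD[OF \<psi>(2)] by blast
        obtain u where u: "u \<in> k" "A y u < ennreal (\<epsilon>/2)" using y wk(2) by (auto simp: Kset_def)
        have "A y w < ennreal (\<epsilon>/2 + \<epsilon>/2)" using u wk(3) eps(1) tri_lless[of y u "\<epsilon>/2" w "\<epsilon>/2"] by auto
        then show "\<exists>w\<in>g'. A y w < ennreal \<epsilon>" using wk(1) by auto
      qed
    qed
    moreover have "Kset A (ennreal (\<epsilon>/2)) \<phi> \<in> \<phi>" using CD[OF \<phi>] eps by simp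
    ultimately show "g \<in> \<phi>" using eps filt_up[OF CD(1)[OF \<phi>]] by blast
  qed
  then show "\<phi> \<in> iso_map A F" using \<phi> by (simp add: iso_map_def)
qed

lemma iso_inj: assumes F1: "F1 \<in> P1_pts A" and F2: "F2 \<in> P1_pts A" and eq: "iso_map A F1 = iso_map A F2"
  shows "F1 \<subseteq> F2"
proof
  fix g assume "g \<in> F1"
  then obtain \<epsilon> where eps: "\<epsilon> > 0" "Kset A (ennreal \<epsilon>) F1 \<subseteq> g" using P1D[OF F1] by blast
  have "Kset A (ennreal (\<epsilon>/2)) F2 \<subseteq> Kset A (ennreal \<epsilon>) F1"
  proof
    fix x assume "x \<in> Kset A (ennreal (\<epsilon>/2)) F2"
    then obtain \<phi> where \<phi>: "\<phi> \<in> iso_map A F2" "x \<in> Kset A (ennreal (\<epsilon>/2) + ennreal (\<epsilon>/2)) \<phi>"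
      using CON'[OF F2, of x _ "\<epsilon>/2"] eps by auto
    then have "F1 \<subseteq> \<phi>" using eq by (auto simp: iso_map_def)
    moreover have "x \<in> Kset A (ennreal \<epsilon>) \<phi>" using \<phi>(2) half_sum[OF eps(1)] by simp
    ultimately show "x \<in> Kset A (ennreal \<epsilon>) F1" using Kset_sub by blast
  qed
  moreover have "Kset A (ennreal (\<epsilon>/2)) F2 \<in> F2" using P1D[OF F2] eps by simp
  ultimately show "g \<in> F2" using eps filt_up[OF P1D(1)[OF F2]] by blast
qed

end


context gm
begin

lemma iso_surj: assumes X: "X \<in> closed_subsets_bar A" shows "\<exists>F\<in>P1_pts A. iso_map A F = X"
proof -
  have Xne: "X \<noteq> {}" and Xc: "X \<subseteq> cauchy_pts A"
    and Xcl: "\<And>\<phi>. \<phi> \<in> cauchy_pts A \<Longrightarrow> (\<forall>r>0. \<exists>\<psi>\<in>X. Abar A \<phi> \<psi> < r) \<Longrightarrow> \<phi> \<in> X"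
    using X by (auto simp: closed_subsets_bar_def closed_in_bar_def)
  define U where "U e = (\<Union>\<phi>\<in>X. Kset A (ennreal e) \<phi>)" for e :: real
  define F where "F = {g. \<exists>e>0. U e \<subseteq> g}"
  have KX: "Kset A (ennreal e) \<phi> \<in> \<phi>" if "\<phi> \<in> X" "e > 0" for \<phi> e
    using CD(2)[of \<phi>] that Xc by blast
  have Une: "U e \<noteq> {}" if ep: "e > 0" for e
  proof -
    obtain \<phi> where \<phi>: "\<phi> \<in> X" using Xne by blast
    then obtain x where "x \<in> Kset A (ennreal e) \<phi>" using KX[OF \<phi> ep] filt_ne CD(1)[of \<phi>] Xc by blast
    then show ?thesis using \<phi> by (auto simp: U_def)
  qed
  have Umono: "U e \<subseteq> U e'" if "e \<le> e'" for e e'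
    unfolding U_def using Kset_mono[of "ennreal e" "ennreal e'"] that by (fastforce intro: ennreal_leI)
  have Ffilt: "is_filt F" unfolding is_filt_def
  proof (intro conjI ballI allI impI)
    have "UNIV \<in> F" unfolding F_def by (auto intro: exI[of _ 1])
    then show "F \<noteq> {}" by blast
  next
    fix f assume "f \<in> F" then show "f \<noteq> {}" using Une by (auto simp: F_def)
  next
    fix f g assume "f \<in> F" "g \<in> F"
    then obtain e e' where "e > 0" "U e \<subseteq> f" "e' > 0" "U e' \<subseteq> g" by (auto simp: F_def)
    then have "U (min e e') \<subseteq> f \<inter> g" using Umono[of "min e e'" e] Umono[of "min e e'" e'] by auto
    then show "f \<inter> g \<in> F" unfolding F_def using \<open>e > 0\<close> \<open>e' > 0\<close> by (intro CollectI exI[of _ "min e e'"]) auto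
  next
    fix f g assume "f \<in> F" "f \<subseteq> g" then show "g \<in> F" by (auto simp: F_def)
  qed
  have UK: "U e \<subseteq> Kset A (ennreal e) F" if "e > 0" for e
  proof
    fix x assume "x \<in> U e"
    then obtain \<phi> where \<phi>: "\<phi> \<in> X" "x \<in> Kset A (ennreal e) \<phi>" by (auto simp: U_def)
    show "x \<in> Kset A (ennreal e) F" unfolding Kset_def
    proof (intro CollectI ballI)
      fix g assume "g \<in> F"
      then obtain e' where e': "e' > 0" "U e' \<subseteq> g" by (auto simp: F_def)
      obtain z where "z \<in> Kset A (ennreal e') \<phi>" "A x z < ennreal e" using \<phi> KX[OF \<phi>(1) e'(1)] by (auto simp: Kset_def)
      then show "\<exists>z\<in>g. A x z < ennreal e" using \<phi>(1) e' by (auto simp: U_def)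
    qed
  qed
  have Fwf: "\<forall>e>0. Kset A (ennreal e) F \<in> F" using UK by (auto simp: F_def)
  have UF: "U e \<in> F" if "e > 0" for e using that by (auto simp: F_def)
  have Fcl: "\<forall>g\<in>F. \<exists>e>0. Kset A (ennreal e) F \<subseteq> g"
  proof
    fix g assume "g \<in> F"
    then obtain e where e: "e > 0" "U e \<subseteq> g" by (auto simp: F_def)
    have "Kset A (ennreal (e/2)) F \<subseteq> U e"
    proof
      fix x assume x: "x \<in> Kset A (ennreal (e/2)) F"
      obtain z where z: "z \<in> U (e/2)" "A x z < ennreal (e/2)" using x UF[of "e/2"] e by (auto simp: Kset_def)
      then obtain \<phi> where \<phi>: "\<phi> \<in> X" "z \<in> Kset A (ennreal (e/2)) \<phi>" by (auto simp: U_def)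
      have "x \<in> Kset A (ennreal e) \<phi>" unfolding Kset_def
      proof (intro CollectI ballI)
        fix h assume "h \<in> \<phi>"
        then obtain w where w: "w \<in> h" "A z w < ennreal (e/2)" using \<phi>(2) by (auto simp: Kset_def)
        have "A x w < ennreal (e/2 + e/2)" using z(2) w(2) e(1) tri_lless[of x z "e/2" w "e/2"] by auto
        then show "\<exists>w\<in>h. A x w < ennreal e" using w(1) by auto
      qed
      then show "x \<in> U e" using \<phi>(1) by (auto simp: U_def)
    qed
    then show "\<exists>e>0. Kset A (ennreal e) F \<subseteq> g" using e by (intro exI[of _ "e/2"]) auto
  qed
  have FP1: "F \<in> P1_pts A"
  proof -
    have w: "weakly_flat A F" unfolding wf_K[OF Ffilt] by (rule Fwf)
    moreover have "closed_filt A F" unfolding cl_K using w Fcl by blast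
    ultimately show ?thesis using Ffilt by (simp add: P1_pts_def)
  qed
  have "iso_map A F = X"
  proof
    show "X \<subseteq> iso_map A F"
    proof
      fix \<phi> assume \<phi>: "\<phi> \<in> X"
      have "F \<subseteq> \<phi>"
      proof
        fix g assume "g \<in> F"
        then obtain e where e: "e > 0" "U e \<subseteq> g" by (auto simp: F_def)
        then have "Kset A (ennreal e) \<phi> \<subseteq> g" using \<phi> by (auto simp: U_def)
        then show "g \<in> \<phi>" using KX[OF \<phi> e(1)] filt_up[OF CD(1)] \<phi> Xc by blast
      qed
      then show "\<phi> \<in> iso_map A F" using \<phi> Xc by (auto simp: iso_map_def)
    qed
  next
    show "iso_map A F \<subseteq> X"
    proof
      fix \<phi> assume "\<phi> \<in> iso_map A F"
      then have \<phi>: "\<phi> \<in> cauchy_pts A" "F \<subseteq> \<phi>" by (auto simp: iso_map_def)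
      have "\<forall>r>0. \<exists>\<psi>\<in>X. Abar A \<phi> \<psi> < r"
      proof (intro allI impI)
        fix r :: ennreal assume "r > 0"
        then obtain \<epsilon> where eps: "\<epsilon> > 0" "ennreal \<epsilon> < r" using small_pos by blast
        define \<eta> where "\<eta> = \<epsilon> / 4"
        have \<eta>: "\<eta> > 0" using eps by (simp add: \<eta>_def)
        obtain h where h: "h \<in> \<phi>" "\<forall>u\<in>h. \<forall>v\<in>h. A u v < ennreal \<eta>" using CD(4)[OF \<phi>(1)] \<eta> by blast
        have "U \<eta> \<in> \<phi>" using UF[OF \<eta>] \<phi>(2) by blast
        then obtain x where x: "x \<in> h \<inter> U \<eta>" using filt_ne[OF CD(1)[OF \<phi>(1)]] filt_int[OF CD(1)[OF \<phi>(1)] h(1)] by blast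
        then obtain \<psi> where \<psi>: "\<psi> \<in> X" "x \<in> Kset A (ennreal \<eta>) \<psi>" by (auto simp: U_def)
        have "Abar A \<phi> \<psi> \<le> ennreal (\<eta> + \<eta>)"
        proof (rule AbarI)
          fix f assume "f \<in> \<psi>"
          then obtain w where w: "w \<in> f" "A x w < ennreal \<eta>" using \<psi>(2) by (auto simp: Kset_def)
          have "\<forall>u\<in>h. A u w \<le> ennreal (\<eta> + \<eta>)"
          proof
            fix u assume "u \<in> h"
            then have "A u x < ennreal \<eta>" using h(2) x by blast
            then show "A u w \<le> ennreal (\<eta> + \<eta>)" using w(2) \<eta> tri_lless[of u x \<eta> w \<eta>] by auto
          qed
          then show "\<exists>w\<in>f. \<exists>k\<in>\<phi>. \<forall>u\<in>k. A u w \<le> ennreal (\<eta> + \<eta>)" using w(1) h(1) by blast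
        qed
        also have "\<dots> < ennreal \<epsilon>" using \<eta> by (intro ennreal_lessI) (auto simp: \<eta>_def)
        also have "\<dots> < r" by (rule eps(2))
        finally show "\<exists>\<psi>\<in>X. Abar A \<phi> \<psi> < r" using \<psi>(1) by blast
      qed
      then show "\<phi> \<in> X" using Xcl \<phi>(1) by blast
    qed
  qed
  then show ?thesis using FP1 by blast
qed

end


lemma P1_dist_M: "P1_dist A F1 F2 = limsup_F F1 (Mminus A F2)"
  by (simp add: P1_dist_def Mminus_def[abs_def])

context gm
begin

lemma iso_dist: assumes F1: "F1 \<in> P1_pts A" and F2: "F2 \<in> P1_pts A"
  shows "haus_dist A (iso_map A F1) (iso_map A F2) = P1_dist A F1 F2"
proof (rule antisym)
  let ?P = "P1_dist A F1 F2"
  show "haus_dist A (iso_map A F1) (iso_map A F2) \<le> ?P"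
  proof (rule ennreal_le_epsilon)
    fix e :: real assume Ptop: "?P < top" and e: "0 < e"
    define \<eta> where "\<eta> = e / 4"
    have \<eta>: "\<eta> > 0" using e by (simp add: \<eta>_def)
    have e3: "ennreal (\<eta> + \<eta> + \<eta>) = ennreal \<eta> + ennreal \<eta> + ennreal \<eta>"
      using ennreal_plus[of \<eta> \<eta>] ennreal_plus[of "\<eta> + \<eta>" \<eta>] \<eta> by simp
    show "haus_dist A (iso_map A F1) (iso_map A F2) \<le> ?P + ennreal e" unfolding haus_dist_def
    proof (rule SUP_least)
      fix \<phi> assume \<phi>: "\<phi> \<in> iso_map A F1"
      then have \<phi>c: "\<phi> \<in> cauchy_pts A" "F1 \<subseteq> \<phi>" by (auto simp: iso_map_def)
      have "?P + 0 < ?P + ennreal \<eta>" using Ptop \<eta> by (subst ennreal_add_left_cancel_less) auto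
      then have "limsup_F F1 (Mminus A F2) < ?P + ennreal \<eta>" by (simp add: P1_dist_M)
      then obtain f where f: "f \<in> F1" "(SUP x\<in>f. Mminus A F2 x) < ?P + ennreal \<eta>"
        unfolding limsup_F_def by (auto simp: INF_less_iff)
      obtain h where h: "h \<in> \<phi>" "\<forall>u\<in>h. \<forall>v\<in>h. A u v < ennreal \<eta>" using CD(4)[OF \<phi>c(1)] \<eta> by blast
      have "f \<in> \<phi>" using f \<phi>c by blast
      then obtain x where x: "x \<in> h \<inter> f"
        using filt_ne[OF CD(1)[OF \<phi>c(1)] filt_int[OF CD(1)[OF \<phi>c(1)] h(1)]] by blast
      have "Mminus A F2 x \<le> (SUP x\<in>f. Mminus A F2 x)" using x by (intro SUP_upper) auto
      then have "Mminus A F2 x < ?P + ennreal \<eta>" using f(2) by (rule le_less_trans)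
      then have "x \<in> Kset A (?P + ennreal \<eta>) F2" by (rule M_less)
      then obtain \<psi> where \<psi>: "\<psi> \<in> iso_map A F2" "x \<in> Kset A (?P + ennreal \<eta> + ennreal \<eta>) \<psi>"
        using CON'[OF F2 _ \<eta>] by blast
      have ab: "Abar A \<phi> \<psi> \<le> ?P + ennreal e"
      proof (rule AbarI)
        fix k assume "k \<in> \<psi>"
        then obtain w where w: "w \<in> k" "A x w < ?P + ennreal \<eta> + ennreal \<eta>" using \<psi>(2) by (auto simp: Kset_def)
        have "\<forall>u\<in>h. A u w \<le> ?P + ennreal e"
        proof
          fix u assume "u \<in> h"
          then have ux: "A u x < ennreal \<eta>" using h(2) x by blast
          have "A u w \<le> A u x + A x w" by (rule tri)
          also have "\<dots> \<le> ennreal \<eta> + (?P + ennreal \<eta> + ennreal \<eta>)" using ux w(2) by (intro add_mono) auto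
          also have "\<dots> = ?P + ennreal (\<eta> + \<eta> + \<eta>)" unfolding e3 by (simp only: ac_simps)
          also have "\<dots> \<le> ?P + ennreal e" using \<eta> by (intro add_left_mono ennreal_leI) (simp add: \<eta>_def)
          finally show "A u w \<le> ?P + ennreal e" .
        qed
        then show "\<exists>w\<in>k. \<exists>k'\<in>\<phi>. \<forall>u\<in>k'. A u w \<le> ?P + ennreal e" using w(1) h(1) by blast
      qed
      show "(INF \<psi>\<in>iso_map A F2. Abar A \<phi> \<psi>) \<le> ?P + ennreal e"
        by (rule INF_lower2[OF \<psi>(1)]) (rule ab)
    qed
  qed
next
  let ?P = "P1_dist A F1 F2"
  define H where "H = haus_dist A (iso_map A F1) (iso_map A F2)"
  show "?P \<le> haus_dist A (iso_map A F1) (iso_map A F2)" unfolding H_def[symmetric]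
  proof (rule ennreal_le_epsilon)
    fix e :: real assume Htop: "H < top" and e: "0 < e"
    define \<eta> where "\<eta> = e / 3"
    have \<eta>: "\<eta> > 0" using e by (simp add: \<eta>_def)
    have e3: "ennreal (\<eta> + \<eta> + \<eta>) = ennreal \<eta> + ennreal \<eta> + ennreal \<eta>"
      using ennreal_plus[of \<eta> \<eta>] ennreal_plus[of "\<eta> + \<eta>" \<eta>] \<eta> by simp
    have Kin: "Kset A (ennreal \<eta>) F1 \<in> F1" using P1D(2)[OF F1] \<eta> by blast
    have "?P \<le> (SUP x\<in>Kset A (ennreal \<eta>) F1. Mminus A F2 x)"
      unfolding P1_dist_M limsup_F_def by (rule INF_lower[OF Kin])
    also have "\<dots> \<le> H + ennreal e"
    proof (rule SUP_least)
      fix x assume x: "x \<in> Kset A (ennreal \<eta>) F1"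
      obtain \<phi> where \<phi>: "\<phi> \<in> iso_map A F1" "x \<in> Kset A (ennreal \<eta> + ennreal \<eta>) \<phi>"
        using CON'[OF F1 x \<eta>] by blast
      have "(INF \<psi>\<in>iso_map A F2. Abar A \<phi> \<psi>) \<le> H" unfolding H_def haus_dist_def by (rule SUP_upper[OF \<phi>(1)])
      also have "H < H + ennreal \<eta>"
      proof -
        have "H + 0 < H + ennreal \<eta>" using Htop \<eta> by (subst ennreal_add_left_cancel_less) auto
        then show ?thesis by simp
      qed
      finally obtain \<psi> where \<psi>: "\<psi> \<in> iso_map A F2" "Abar A \<phi> \<psi> < H + ennreal \<eta>" by (auto simp: INF_less_iff)
      have "x \<in> Kset A (H + ennreal e) F2" unfolding Kset_def
      proof (intro CollectI ballI)
        fix g assume "g \<in> F2"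
        then have "g \<in> \<psi>" using \<psi>(1) by (auto simp: iso_map_def)
        then obtain w k where wk: "w \<in> g" "k \<in> \<phi>" "\<forall>u\<in>k. A u w < H + ennreal \<eta>" using AbarD[OF \<psi>(2)] by blast
        obtain u where u: "u \<in> k" "A x u < ennreal \<eta> + ennreal \<eta>" using \<phi>(2) wk(2) by (auto simp: Kset_def)
        have "A x w \<le> A x u + A u w" by (rule tri)
        also have "\<dots> < (ennreal \<eta> + ennreal \<eta>) + (H + ennreal \<eta>)" using u wk(3) by (intro ennreal_add_strict) auto
        also have "\<dots> = H + ennreal (\<eta> + \<eta> + \<eta>)" unfolding e3 by (simp only: ac_simps)
        also have "\<eta> + \<eta> + \<eta> = e" by (simp add: \<eta>_def)
        finally show "\<exists>w\<in>g. A x w < H + ennreal e" using wk(1) by blast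
      qed
      then show "Mminus A F2 x \<le> H + ennreal e" by (rule M_le)
    qed
    finally show "?P \<le> H + ennreal e" .
  qed
qed

end

theorem mainTheorem18:
  fixes A :: "'a \<Rightarrow> 'a \<Rightarrow> ennreal"
  assumes "gen_metric A" and "symmetric_gm A"
  shows "bij_betw (iso_map A) (P1_pts A) (closed_subsets_bar A)
    \<and> (\<forall>F1\<in>P1_pts A. \<forall>F2\<in>P1_pts A.
          haus_dist A (iso_map A F1) (iso_map A F2) = P1_dist A F1 F2)"
proof -
  have g: "\<forall>x. A x x = 0" "\<forall>x y z. A x z \<le> A x y + A y z" "\<forall>x y. A x y = A y x"
    using assms unfolding gen_metric_def symmetric_gm_def by blast+
  interpret gm A
  proof
    fix x show "A x x = 0" using g by blast
  next
    fix x y z show "A x z \<le> A x y + A y z" using g by blast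
  next
    fix x y show "A x y = A y x" using g by blast
  qed
  have inj: "inj_on (iso_map A) (P1_pts A)"
  proof (rule inj_onI)
    fix F1 F2 assume F: "F1 \<in> P1_pts A" "F2 \<in> P1_pts A" "iso_map A F1 = iso_map A F2"
    show "F1 = F2" using iso_inj[OF F(1) F(2) F(3)] iso_inj[OF F(2) F(1) F(3)[symmetric]] by (rule subset_antisym)
  qed
  have img: "iso_map A ` P1_pts A = closed_subsets_bar A"
  proof
    show "iso_map A ` P1_pts A \<subseteq> closed_subsets_bar A"
      using iso_ne iso_closed by (auto simp: closed_subsets_bar_def)
    show "closed_subsets_bar A \<subseteq> iso_map A ` P1_pts A"
      using iso_surj by fastforce
  qed
  show ?thesis using inj img iso_dist by (simp add: bij_betw_def)
qed

end
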